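(* Suppose $\frac{\Delta_L}{\overline{\Delta}_L}\le\sqrt{n}$. Let $\epsilon\in(0,1)$ and $c\ge1$ a constant, and sample $n_b=\frac{c}{1-\epsilon}\Delta$ batches, each consisting of $B=(1-\epsilon)\frac{n}{\Delta}$ updates drawn uniformly at random with replacement from the $n$ updates. For the $i$-th batch let $G_u^i$ be the subgraph of $G_u$ induced by its sampled updates and $E_u^i$ its number of edges. Then the total number of edges $Z=\sum_{i=1}^{n_b}E_u^i$ is less than $O(E_u\log n)$ with probability $1-n^{-\Omega(\log n)}$.
   Context: $G_u$ is a bipartite graph whose left vertices are $n$ updates $u_1,\dots,u_n$ and whose right vertices are $d$ model variables, with $u_i$ adjacent to a variable iff the update reads or writes it; $E_u$ is its number of edges, $\Delta_L$ its maximum left degree and $\overline{\Delta}_L$ its average left degree. The conflict graph on the updates joins two updates iff they share a variable; $\Delta$ is its maximum degree. The induced subgraph of a batch consists of the sampled updates together with all their incident edges and adjacent variables. *)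

theory Defs
  imports "HOL-Probability.Probability"
begin

text \<open>The bipartite update graph G_u: updates are 0..<n, variables are natural numbers;
  update i is adjacent exactly to the variables in the set Nb i.\<close>

definition E_u :: "nat \<Rightarrow> (nat \<Rightarrow> nat set) \<Rightarrow> nat" where
  "E_u n Nb = (\<Sum>i<n. card (Nb i))"

definition max_left_deg :: "nat \<Rightarrow> (nat \<Rightarrow> nat set) \<Rightarrow> nat" where
  "max_left_deg n Nb = Max ((\<lambda>i. card (Nb i)) ` {..<n})"

definition avg_left_deg :: "nat \<Rightarrow> (nat \<Rightarrow> nat set) \<Rightarrow> real" where
  "avg_left_deg n Nb = real (E_u n Nb) / real n"

definition conflict_deg :: "nat \<Rightarrow> (nat \<Rightarrow> nat set) \<Rightarrow> nat \<Rightarrow> nat" where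
  "conflict_deg n Nb i = card {j\<in>{..<n}. j \<noteq> i \<and> Nb i \<inter> Nb j \<noteq> {}}"

definition max_conflict_deg :: "nat \<Rightarrow> (nat \<Rightarrow> nat set) \<Rightarrow> nat" where
  "max_conflict_deg n Nb = Max (conflict_deg n Nb ` {..<n})"

text \<open>A sample s assigns to slot (i,k) (batch i, draw k) an update index.
  The induced subgraph of batch i contains the set of sampled updates of batch i
  with all their incident edges; its edge count is:\<close>
definition batch_edges :: "(nat \<Rightarrow> nat set) \<Rightarrow> nat \<Rightarrow> (nat \<times> nat \<Rightarrow> nat) \<Rightarrow> nat \<Rightarrow> nat" where
  "batch_edges Nb B s i = (\<Sum>j\<in>(\<lambda>k. s (i, k)) ` {..<B}. card (Nb j))"

definition total_batch_edges :: "(nat \<Rightarrow> nat set) \<Rightarrow> nat \<Rightarrow> nat \<Rightarrow> (nat \<times> nat \<Rightarrow> nat) \<Rightarrow> nat" where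
  "total_batch_edges Nb nb B s = (\<Sum>i<nb. batch_edges Nb B s i)"

definition batch_sampling :: "nat \<Rightarrow> nat \<Rightarrow> nat \<Rightarrow> (nat \<times> nat \<Rightarrow> nat) pmf" where
  "batch_sampling n nb B = Pi_pmf ({..<nb} \<times> {..<B}) 0 (\<lambda>_. pmf_of_set {..<n})"

end

theory Submission imports Defs begin

lemma hoeff:
  fixes g :: "nat \<Rightarrow> real"
  assumes n: "n > 0" and fin: "finite I" and ne: "I \<noteq> {}" and D: "D > 0"
    and gb: "\<And>j. j < n \<Longrightarrow> g j \<in> {0..D}" and e: "e \<ge> 0"
  shows "measure_pmf.prob (Pi_pmf I 0 (\<lambda>_. pmf_of_set {..<n}))
     {s. (\<Sum>x\<in>I. g (s x)) \<ge> real (card I) * ((\<Sum>j<n. g j) / real n) + e}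
     \<le> exp (-2 * e\<^sup>2 / (real (card I) * D\<^sup>2))"
proof -
  define P where "P = Pi_pmf I 0 (\<lambda>_. pmf_of_set {..<n})"
  have comp: "x \<in> I \<Longrightarrow> map_pmf (\<lambda>s. s x) P = pmf_of_set {..<n}" for x
    unfolding P_def by (subst Pi_pmf_component) (use fin in auto)
  have ex: "measure_pmf.expectation P (\<lambda>s. g (s x)) = (\<Sum>j<n. g j) / real n" if x: "x \<in> I" for x
  proof -
    have "measure_pmf.expectation P (\<lambda>s. g (s x)) = measure_pmf.expectation (map_pmf (\<lambda>s. s x) P) g"
      by simp
    also have "\<dots> = (\<Sum>j<n. g j) / real n"
      using n by (subst comp[OF x], subst integral_pmf_of_set) auto
    finally show ?thesis .
  qed
  have setP: "s \<in> set_pmf P \<Longrightarrow> x \<in> I \<Longrightarrow> s x < n" for s x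
    unfolding P_def using n fin by (auto simp: set_Pi_pmf PiE_dflt_def set_pmf_of_set[of "{..<n}"] lessThan_empty_iff)
  interpret H: Hoeffding_ineq "measure_pmf P" I "\<lambda>x s. g (s x)" "\<lambda>_. 0" "\<lambda>_. D"
     "real (card I) * ((\<Sum>j<n. g j) / real n)"
  proof unfold_locales
    show "finite I" by (rule fin)
    show "prob_space.indep_vars (measure_pmf P) (\<lambda>_. borel) (\<lambda>x s. g (s x)) I"
      unfolding P_def
      by (intro prob_space.indep_vars_compose2[OF _ indep_vars_Pi_pmf[OF fin]])
         (auto simp: measure_pmf.prob_space_axioms)
    show "AE s in measure_pmf P. g (s i) \<in> {0..D}" if "i \<in> I" for i
      using that setP gb by (auto simp: AE_measure_pmf_iff)
    show "real (card I) * ((\<Sum>j<n. g j) / real n) \<equiv> (\<Sum>i\<in>I. measure_pmf.expectation P (\<lambda>s. g (s i)))"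
      using ex by simp
  qed
  have pos: "(\<Sum>i\<in>I. (D - 0)\<^sup>2) > 0" using D fin ne by (intro sum_pos) auto
  show ?thesis using H.Hoeffding_ineq_ge[OF e pos] by (simp add: P_def)
qed

lemma prob_mono_pmf:
  assumes "\<And>s. s \<in> set_pmf P \<Longrightarrow> s \<in> G \<Longrightarrow> s \<in> A"
  shows "measure_pmf.prob P G \<le> measure_pmf.prob P A"
proof -
  have "measure_pmf.prob P G = measure_pmf.prob P (G \<inter> set_pmf P)"
    by (simp add: measure_Int_set_pmf)
  also have "\<dots> \<le> measure_pmf.prob P A"
    using assms by (intro measure_pmf.finite_measure_mono) auto
  finally show ?thesis .
qed

lemma total_le:
  "real (total_batch_edges Nb nb B s) \<le> (\<Sum>x\<in>{..<nb}\<times>{..<B}. real (card (Nb (s x))))"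
proof -
  have "batch_edges Nb B s i \<le> (\<Sum>k<B. card (Nb (s (i,k))))" for i
    unfolding batch_edges_def
    using sum_image_le[of "{..<B}" "\<lambda>j. card (Nb j)" "\<lambda>k. s (i, k)"] by (simp add: o_def)
  hence "total_batch_edges Nb nb B s \<le> (\<Sum>i<nb. \<Sum>k<B. card (Nb (s (i,k))))"
    unfolding total_batch_edges_def by (intro sum_mono) auto
  also have "\<dots> = (\<Sum>x\<in>{..<nb}\<times>{..<B}. card (Nb (s x)))"
    by (simp add: sum.cartesian_product)
  finally show ?thesis by (metis of_nat_le_iff of_nat_sum)
qed

theorem lemma3:
  fixes c :: real
  assumes "c \<ge> 1"
  shows "\<exists>C>0. \<exists>\<kappa>>0. \<exists>N0::nat. \<forall>n\<ge>N0. \<forall>(V::nat set) (Nb::nat \<Rightarrow> nat set) (\<epsilon>::real) (nb::nat) (B::nat).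
    finite V \<longrightarrow> (\<forall>i<n. Nb i \<subseteq> V) \<longrightarrow>
    0 < \<epsilon> \<longrightarrow> \<epsilon> < 1 \<longrightarrow>
    real (max_left_deg n Nb) / avg_left_deg n Nb \<le> sqrt (real n) \<longrightarrow>
    real nb = c / (1 - \<epsilon>) * real (max_conflict_deg n Nb) \<longrightarrow>
    real B = (1 - \<epsilon>) * real n / real (max_conflict_deg n Nb) \<longrightarrow>
    measure_pmf.prob (batch_sampling n nb B)
       {s. real (total_batch_edges Nb nb B s) \<le> C * real (E_u n Nb) * ln (real n)}
      \<ge> 1 - real n powr (- \<kappa> * ln (real n))"
proof -
  have c2: "0 < 2*c" using assms by simp
  have one: "0 < (1::real)" by simp
  show ?thesis
proof (rule exI[of _ "2*c"], rule conjI, rule c2, rule exI[of _ "1::real"], rule conjI, rule one, rule exI[of _ "3::nat"], intro allI impI)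
  fix n :: nat and V :: "nat set" and Nb :: "nat \<Rightarrow> nat set" and \<epsilon> :: real and nb B :: nat
  assume n3: "3 \<le> n" and "finite V" and "\<forall>i<n. Nb i \<subseteq> V" and e0: "0 < \<epsilon>" and e1: "\<epsilon> < 1"
    and ratio: "real (max_left_deg n Nb) / avg_left_deg n Nb \<le> sqrt (real n)"
    and hnb: "real nb = c / (1 - \<epsilon>) * real (max_conflict_deg n Nb)"
    and hB: "real B = (1 - \<epsilon>) * real n / real (max_conflict_deg n Nb)"
  define P where "P = batch_sampling n nb B"
  define A where "A = {s. real (total_batch_edges Nb nb B s) \<le> 2*c * real (E_u n Nb) * ln (real n)}"
  define E where "E = E_u n Nb"
  define D where "D = max_left_deg n Nb"
  define \<Delta> where "\<Delta> = max_conflict_deg n Nb"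
  define I where "I = {..<nb}\<times>{..<B}"
  have n0: "n > 0" using n3 by simp
  have lnn: "ln (real n) \<ge> 1"
  proof -
    have "exp 1 \<le> (3::real)" using exp_le by simp
    also have "\<dots> \<le> real n" using n3 by simp
    finally show ?thesis using ln_ge_iff n0 by (metis exp_gt_zero exp_le_cancel_iff exp_ln of_nat_0_less_iff order_trans_rules(23))
  qed
  have rhs_le1: "1 - real n powr (- 1 * ln (real n)) \<le> 1" by simp
  have setP: "s (i,k) < n" if "s \<in> set_pmf P" "i < nb" "k < B" for s i k
    using that n0 unfolding P_def batch_sampling_def
    by (auto simp: set_Pi_pmf PiE_dflt_def set_pmf_of_set[of "{..<n}"] lessThan_empty_iff)
  have "1 - real n powr (- 1 * ln (real n)) \<le> measure_pmf.prob P A"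
  proof (cases "E = 0 \<or> \<Delta> = 0")
    case True
    have "measure_pmf.prob P UNIV \<le> measure_pmf.prob P A"
    proof (rule prob_mono_pmf)
      fix s assume s: "s \<in> set_pmf P"
      have "total_batch_edges Nb nb B s = 0"
      proof (cases "\<Delta> = 0")
        case True
        hence "nb = 0" using hnb unfolding \<Delta>_def by simp
        thus ?thesis by (simp add: total_batch_edges_def)
      next
        case False
        hence E0: "E = 0" using \<open>E = 0 \<or> \<Delta> = 0\<close> by simp
        have "card (Nb j) = 0" if "j < n" for j
          using E0 that unfolding E_def E_u_def by simp
        thus ?thesis using setP[OF s]
          by (auto simp: total_batch_edges_def batch_edges_def)
      qed
      thus "s \<in> A" unfolding A_def using assms lnn by simp
    qed
    moreover have "measure_pmf.prob P UNIV = 1" by simp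
    ultimately show ?thesis using powr_ge_zero[of "real n" "- 1 * ln (real n)"] by linarith
  next
    case False
    hence E0: "E > 0" and \<Delta>0: "\<Delta> > 0" by auto
    obtain j where j: "j < n" "card (Nb j) > 0"
      using E0 unfolding E_def E_u_def by (metis gr0I sum.neutral lessThan_iff)
    have Dge: "card (Nb j') \<le> D" if "j' < n" for j'
      unfolding D_def max_left_deg_def using that by (intro Max_ge) auto
    have D0: "real D > 0" using Dge[OF j(1)] j(2) by simp
    have nbB: "real nb * real B = c * real n"
    proof -
      have "real nb * real B = (c / (1 - \<epsilon>) * real \<Delta>) * ((1 - \<epsilon>) * real n / real \<Delta>)"
        using hnb hB unfolding \<Delta>_def by simp
      also have "\<dots> = c * real n" using \<Delta>0 e1 by (simp add: field_simps)
      finally show ?thesis .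
    qed
    have cardI: "real (card I) = c * real n" unfolding I_def using nbB by simp
    have Ine: "I \<noteq> {}" using cardI assms n0 by auto
    have finI: "finite I" unfolding I_def by simp
    define g where "g j = real (card (Nb j))" for j
    have sumg: "(\<Sum>j<n. g j) = real E" unfolding g_def E_def E_u_def by simp
    have mu: "real (card I) * ((\<Sum>j<n. g j) / real n) = c * real E"
      using cardI sumg n0 by simp
    define e where "e = 2*c*real E * ln (real n) - c * real E"
    have ege: "e \<ge> c * real E * ln (real n)"
      unfolding e_def using lnn assms E0 by (simp add: algebra_simps mult_left_mono)
    have e_nn: "e \<ge> 0" using ege lnn assms E0 by (smt (verit) mult_nonneg_nonneg of_nat_0_le_iff)
    have H: "measure_pmf.prob P {s. (\<Sum>x\<in>I. g (s x)) \<ge> c * real E + e}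
        \<le> exp (-2 * e\<^sup>2 / (real (card I) * (real D)\<^sup>2))"
      using hoeff[OF n0 finI Ine D0, of g e] Dge e_nn mu
      unfolding P_def batch_sampling_def I_def g_def by auto
    define G where "G = UNIV - {s. (\<Sum>x\<in>I. g (s x)) \<ge> c * real E + e}"
    have "measure_pmf.prob P G = 1 - measure_pmf.prob P {s. (\<Sum>x\<in>I. g (s x)) \<ge> c * real E + e}"
      unfolding G_def by (metis measure_pmf.prob_compl sets_measure_pmf space_measure_pmf UNIV_I)
    have GA: "measure_pmf.prob P G \<le> measure_pmf.prob P A"
    proof (rule prob_mono_pmf)
      fix s assume "s \<in> G"
      hence "(\<Sum>x\<in>I. g (s x)) < 2*c * real E * ln (real n)" unfolding G_def e_def by auto
      thus "s \<in> A" using total_le[of Nb nb B s] unfolding A_def I_def g_def E_def by simp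
    qed
    have Dle: "real D \<le> sqrt (real n) * (real E / real n)"
      using ratio E0 n0 unfolding D_def avg_left_deg_def E_def by (simp add: field_simps)
    have "(real D)\<^sup>2 \<le> (sqrt (real n) * (real E / real n))\<^sup>2"
      using Dle D0 by (intro power_mono) auto
    also have "\<dots> = (real E)\<^sup>2 / real n" using n0 by (simp add: power_mult_distrib power2_eq_square field_simps)
    finally have D2: "real n * (real D)\<^sup>2 \<le> (real E)\<^sup>2" using n0 by (simp add: field_simps)
    have den_pos: "real (card I) * (real D)\<^sup>2 > 0" using cardI assms n0 D0 by simp
    have den_le: "real (card I) * (real D)\<^sup>2 \<le> c * (real E)\<^sup>2"
      using cardI D2 assms by (simp add: mult.assoc mult_left_mono)
    have e2: "e\<^sup>2 \<ge> (c * real E * ln (real n))\<^sup>2"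
      using ege lnn assms E0 by (intro power_mono) auto
    have "(ln (real n))\<^sup>2 * (c * (real E)\<^sup>2) \<le> 2 * (c * real E * ln (real n))\<^sup>2"
    proof -
      have "0 \<le> (c * (real E)\<^sup>2 * (ln (real n))\<^sup>2) * (2*c - 1)"
        using assms by (intro mult_nonneg_nonneg) auto
      moreover have "2 * (c * real E * ln (real n))\<^sup>2 - (ln (real n))\<^sup>2 * (c * (real E)\<^sup>2)
          = (c * (real E)\<^sup>2 * (ln (real n))\<^sup>2) * (2*c - 1)"
        by (simp add: power2_eq_square algebra_simps)
      ultimately show ?thesis by linarith
    qed
    also have "\<dots> \<le> 2 * e\<^sup>2" using e2 by simp
    finally have k1: "(ln (real n))\<^sup>2 * (c * (real E)\<^sup>2) \<le> 2 * e\<^sup>2" .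
    have "(ln (real n))\<^sup>2 * (real (card I) * (real D)\<^sup>2) \<le> (ln (real n))\<^sup>2 * (c * (real E)\<^sup>2)"
      using den_le by (intro mult_left_mono) auto
    with k1 have "(ln (real n))\<^sup>2 \<le> 2 * e\<^sup>2 / (real (card I) * (real D)\<^sup>2)"
      using den_pos by (simp add: pos_le_divide_eq)
    hence "exp (-2 * e\<^sup>2 / (real (card I) * (real D)\<^sup>2)) \<le> exp (- (ln (real n))\<^sup>2)"
      by simp
    also have "\<dots> = real n powr (- 1 * ln (real n))"
      using n0 by (simp add: powr_def power2_eq_square)
    finally have "measure_pmf.prob P {s. (\<Sum>x\<in>I. g (s x)) \<ge> c * real E + e} \<le> real n powr (- 1 * ln (real n))"
      using H by linarith
    thus ?thesis using GA \<open>measure_pmf.prob P G = _\<close> by linarith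
  qed
  thus "1 - real n powr (- 1 * ln (real n)) \<le> measure_pmf.prob (batch_sampling n nb B)
       {s. real (total_batch_edges Nb nb B s) \<le> 2*c * real (E_u n Nb) * ln (real n)}"
    unfolding P_def A_def .
qed
qed

end
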